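(* Suppose $V$ is irreducible and let $\bar p$ be the (unique) maximizer of $p\mapsto\min_{k}\mathrm{SIR}_k(p)/\gamma_k$ over $\mathcal P$. Then $\mathcal N_0(\bar p)=\{n_0\in\mathcal N:\rho(B^{(n_0)})=\max_{n\in\mathcal N}\rho(B^{(n)})\}$. Moreover, the SIR targets $\gamma=(\gamma_1,\dots,\gamma_K)\in\mathbb R_{++}^K$ are feasible (i.e. there exists $p\in\mathcal P$ with $\mathrm{SIR}_k(p)\ge\gamma_k$ for all $k$) if and only if $\max_{n\in\mathcal N}\rho(B^{(n)})=\max_{n\in\mathcal N}\rho(A^{(n)})\le 1$, where $\Gamma=\mathrm{diag}(\gamma_1,\dots,\gamma_K)$.
   Context: Network model: $K\ge 2$ links, $\mathcal K=\{1,\dots,K\}$. Power constraint set $\mathcal P=\{p\in\mathbb R_+^K: Cp\le\hat p\}$, where $C\in\{0,1\}^{N\times K}$ has at least one entry equal to $1$ in each column and $\hat p=(P_1,\dots,P_N)\in\mathbb R_{++}^N$; $\mathcal N=\{1,\dots,N\}$; $c_n\in\{0,1\}^K$ is the $n$-th row of $C$ (as a column vector) and $g_n(p)=c_n^Tp/P_n$. Gain matrix $V\in\mathbb R_+^{K\times K}$ with zero diagonal, noise vector $z\in\mathbb R_{++}^K$, $\mathrm{SIR}_k(p)=p_k/((Vp)_k+z_k)$. For $n\in\mathcal N$: $B^{(n)}=\Gamma V+\frac1{P_n}\Gamma z c_n^T$ and $A^{(n)}=\begin{pmatrix}\Gamma V&\Gamma z\\ \frac1{P_n}c_n^T\Gamma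 V&\frac1{P_n}c_n^T\Gamma z\end{pmatrix}$. For $p\in\mathbb R_+^K$, $\mathcal N_0(p)=\{n\in\mathcal N: g_n(p)=\max_{m\in\mathcal N}g_m(p)=1\}$. $\rho(\cdot)$ denotes spectral radius. *)

theory Defs
  imports Complex_Main "Jordan_Normal_Form.Matrix" "Jordan_Normal_Form.Spectral_Radius"
begin

(* Vectors/matrices are Jordan_Normal_Form vec/mat with explicit dimensions.
   Indices are 0-based: link k corresponds to index k-1, constraint n to index n-1. *)

definition irreducible_mat :: "real mat \<Rightarrow> bool" where
  "irreducible_mat V \<longleftrightarrow> (\<forall>i j. i < dim_row V \<longrightarrow> j < dim_row V \<longrightarrow> i \<noteq> j \<longrightarrow>
      (\<exists>m. (V ^\<^sub>m m) $$ (i, j) > 0))"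

definition rho :: "real mat \<Rightarrow> real" where
  "rho M = spectral_radius (map_mat complex_of_real M)"

definition pset :: "nat \<Rightarrow> real mat \<Rightarrow> real vec \<Rightarrow> real vec set" where
  "pset K C phat = {p \<in> carrier_vec K. (\<forall>k<K. 0 \<le> p $ k) \<and>
                      (\<forall>n<dim_row C. (C *\<^sub>v p) $ n \<le> phat $ n)}"

definition gfun :: "real mat \<Rightarrow> real vec \<Rightarrow> nat \<Rightarrow> real vec \<Rightarrow> real" where
  "gfun C phat n p = (row C n \<bullet> p) / phat $ n"

definition N0 :: "nat \<Rightarrow> real mat \<Rightarrow> real vec \<Rightarrow> real vec \<Rightarrow> nat set" where
  "N0 N C phat p = {n. n < N \<and> gfun C phat n p = Max {gfun C phat m p | m. m < N}
                        \<and> Max {gfun C phat m p | m. m < N} = 1}"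

definition SIR :: "real mat \<Rightarrow> real vec \<Rightarrow> nat \<Rightarrow> real vec \<Rightarrow> real" where
  "SIR V z k p = p $ k / ((V *\<^sub>v p) $ k + z $ k)"

definition Gam :: "nat \<Rightarrow> real vec \<Rightarrow> real mat" where
  "Gam K gamma = mat K K (\<lambda>(i, j). if i = j then gamma $ i else 0)"

definition Bmat :: "nat \<Rightarrow> real mat \<Rightarrow> real vec \<Rightarrow> real mat \<Rightarrow> real vec \<Rightarrow> real vec \<Rightarrow> nat \<Rightarrow> real mat" where
  "Bmat K C phat V z gamma n =
     Gam K gamma * V + (1 / phat $ n) \<cdot>\<^sub>m (mat_of_cols K [Gam K gamma *\<^sub>v z] * mat_of_rows K [row C n])"

definition Amat :: "nat \<Rightarrow> real mat \<Rightarrow> real vec \<Rightarrow> real mat \<Rightarrow> real vec \<Rightarrow> real vec \<Rightarrow> nat \<Rightarrow> real mat" where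
  "Amat K C phat V z gamma n =
     four_block_mat
       (Gam K gamma * V)
       (mat_of_cols K [Gam K gamma *\<^sub>v z])
       ((1 / phat $ n) \<cdot>\<^sub>m (mat_of_rows K [row C n] * (Gam K gamma * V)))
       (mat 1 1 (\<lambda>_. (1 / phat $ n) * (row C n \<bullet> (Gam K gamma *\<^sub>v z))))"

end

theory Submission
  imports Defs
begin

lemma cw_upper:
  fixes M :: "real mat" and p :: "nat \<Rightarrow> real"
  assumes M: "M \<in> carrier_mat n n" and n: "0 < n"
    and nn: "\<forall>i<n. \<forall>j<n. M $$ (i,j) \<ge> 0"
    and pp: "\<forall>i<n. p i > 0"
    and ineq: "\<forall>i<n. (\<Sum>j<n. M $$ (i,j) * p j) \<le> l * p i"
  shows "rho M \<le> l"
proof -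
  let ?MC = "map_mat complex_of_real M"
  have MC: "?MC \<in> carrier_mat n n" using M by auto
  from spectral_radius_mem_max(1)[OF MC n] obtain a where
    a: "a \<in> spectrum ?MC" and r: "rho M = norm a" unfolding rho_def by auto
  from a obtain v where v: "v \<in> carrier_vec n" "v \<noteq> 0\<^sub>v n" "?MC *\<^sub>v v = a \<cdot>\<^sub>v v"
    unfolding spectrum_def eigenvalue_def eigenvector_def using MC by auto
  define S where "S = (\<lambda>j. norm (v $ j) / p j) ` {..<n}"
  have fS: "finite S" "S \<noteq> {}" using n unfolding S_def by auto
  define t where "t = Max S"
  obtain i where i: "i < n" "t = norm (v $ i) / p i"
    using Max_in[OF fS] unfolding t_def S_def by auto
  have tj: "norm (v $ j) \<le> t * p j" if "j < n" for j
  proof -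
    have "norm (v $ j) / p j \<le> t" unfolding t_def using that fS by (intro Max_ge) (auto simp: S_def)
    thus ?thesis using pp that by (simp add: divide_le_eq)
  qed
  obtain j where j: "j < n" "v $ j \<noteq> 0" using v by (metis eq_vecI carrier_vecD index_zero_vec)
  have "0 < norm (v $ j)" using j by auto
  also have "\<dots> \<le> t * p j" using tj j by auto
  finally have tpos: "t > 0" using pp j by (auto simp: zero_less_mult_iff)
  have vi: "norm (v $ i) = t * p i" using i pp by auto
  have "norm a * norm (v $ i) = norm ((?MC *\<^sub>v v) $ i)" using v i by (simp add: norm_mult)
  also have "(?MC *\<^sub>v v) $ i = (\<Sum>j<n. complex_of_real (M $$ (i,j)) * v $ j)"
    using M v(1) i by (simp add: mult_mat_vec_def scalar_prod_def lessThan_atLeast0 ac_simps)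
  also have "norm \<dots> \<le> (\<Sum>j<n. M $$ (i,j) * norm (v $ j))"
    by (rule order.trans[OF norm_sum]) (use nn i in \<open>auto simp: norm_mult\<close>)
  also have "\<dots> \<le> (\<Sum>j<n. M $$ (i,j) * (t * p j))"
    by (rule sum_mono, rule mult_left_mono) (use nn i tj in auto)
  also have "\<dots> = t * (\<Sum>j<n. M $$ (i,j) * p j)" by (simp add: sum_distrib_left ac_simps)
  also have "\<dots> \<le> t * (l * p i)" using ineq i(1) tpos by (intro mult_left_mono) auto
  also have "\<dots> = l * norm (v $ i)" using vi by simp
  finally have "norm a * norm (v $ i) \<le> l * norm (v $ i)" .
  moreover have "norm (v $ i) > 0" using vi tpos pp i by auto
  ultimately show ?thesis using r by simp
qed

lemma eig_lower:
  fixes M :: "real mat" and p :: "nat \<Rightarrow> real"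
  assumes M: "M \<in> carrier_mat n n" and n: "0 < n"
    and ex: "\<exists>i<n. p i \<noteq> 0" and l: "l \<ge> 0"
    and eq: "\<forall>i<n. (\<Sum>j<n. M $$ (i,j) * p j) = l * p i"
  shows "l \<le> rho M"
proof -
  let ?MC = "map_mat complex_of_real M"
  have MC: "?MC \<in> carrier_mat n n" using M by auto
  define v where "v = vec n (\<lambda>i. complex_of_real (p i))"
  have "v \<noteq> 0\<^sub>v n" using ex unfolding v_def by (metis index_vec index_zero_vec(1) of_real_eq_0_iff)
  moreover have "?MC *\<^sub>v v = complex_of_real l \<cdot>\<^sub>v v"
  proof (rule eq_vecI)
    fix i assume i: "i < dim_vec (complex_of_real l \<cdot>\<^sub>v v)"
    hence i: "i < n" by (simp add: v_def)
    have "(?MC *\<^sub>v v) $ i = (\<Sum>j<n. complex_of_real (M $$ (i,j) * p j))"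
      using M i by (simp add: mult_mat_vec_def scalar_prod_def lessThan_atLeast0 v_def)
    also have "\<dots> = complex_of_real (\<Sum>j<n. M $$ (i,j) * p j)" by simp
    also have "\<dots> = (complex_of_real l \<cdot>\<^sub>v v) $ i" using eq i by (simp add: v_def)
    finally show "(?MC *\<^sub>v v) $ i = (complex_of_real l \<cdot>\<^sub>v v) $ i" .
  qed (use M in \<open>auto simp: v_def\<close>)
  ultimately have "complex_of_real l \<in> spectrum ?MC"
    unfolding spectrum_def eigenvalue_def eigenvector_def using M by (intro CollectI exI[of _ v]) (auto simp: v_def)
  from spectral_radius_mem_max(2)[OF MC n imageI[OF this]] l show ?thesis
    unfolding rho_def by simp
qed



lemma edge_exists:
  fixes V :: "real mat"
  assumes V: "V \<in> carrier_mat K K" and nn: "\<forall>i<K. \<forall>j<K. V $$ (i,j) \<ge> 0"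
    and S: "S \<subseteq> {..<K}" and i: "i \<in> S"
  shows "j < K \<Longrightarrow> j \<notin> S \<Longrightarrow> (V ^\<^sub>m m) $$ (i,j) > 0 \<Longrightarrow> \<exists>a\<in>S. \<exists>b<K. b \<notin> S \<and> V $$ (a,b) > 0"
proof (induction m arbitrary: j)
  case 0
  have "i < K" using S i by auto
  moreover have "i \<noteq> j" using 0 i by auto
  ultimately show ?case using 0 V by auto
next
  case (Suc m)
  have iK: "i < K" using S i by auto
  have "(V ^\<^sub>m Suc m) $$ (i,j) = (\<Sum>l<K. (V ^\<^sub>m m) $$ (i,l) * V $$ (l,j))"
    using V iK Suc.prems by (simp add: scalar_prod_def lessThan_atLeast0)
  with Suc.prems have "(\<Sum>l<K. (V ^\<^sub>m m) $$ (i,l) * V $$ (l,j)) > 0" by simp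
  then obtain l where l: "l < K" "(V ^\<^sub>m m) $$ (i,l) * V $$ (l,j) > 0"
    by (metis (no_types, lifting) lessThan_iff not_le sum_nonpos)
  have Vlj: "V $$ (l,j) > 0" and Vm: "(V ^\<^sub>m m) $$ (i,l) > 0"
  proof -
    have "V $$ (l,j) \<ge> 0" using nn l(1) Suc.prems(1) by auto
    with l(2) show "V $$ (l,j) > 0" "(V ^\<^sub>m m) $$ (i,l) > 0" by (auto simp: zero_less_mult_iff)
  qed
  show ?case
  proof (cases "l \<in> S")
    case True thus ?thesis using Vlj Suc.prems by blast
  next
    case False thus ?thesis using Suc.IH[OF l(1) False Vm] by blast
  qed
qed



lemma div_mono_aux: "(0::real) \<le> a \<Longrightarrow> 0 < g \<Longrightarrow> 0 \<le> x' \<Longrightarrow> x' \<le> x \<Longrightarrow> 0 < z \<Longrightarrow> a/(g*(x+z)) \<le> a/(g*(x'+z))"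
  by (intro divide_left_mono mult_left_mono) (auto intro: mult_pos_pos)

lemma div_smono_aux: "(0::real) < a \<Longrightarrow> 0 < g \<Longrightarrow> 0 \<le> x' \<Longrightarrow> x' < x \<Longrightarrow> 0 < z \<Longrightarrow> a/(g*(x+z)) < a/(g*(x'+z))"
  by (intro divide_strict_left_mono mult_strict_left_mono) (auto intro: mult_pos_pos)

locale setting =
  fixes K N :: nat and C V :: "real mat" and phat z gamma :: "real vec"
  assumes K2: "K \<ge> 2"
    and C_dim: "C \<in> carrier_mat N K"
    and C_01: "\<forall>n<N. \<forall>k<K. C $$ (n, k) = 0 \<or> C $$ (n, k) = 1"
    and C_col: "\<forall>k<K. \<exists>n<N. C $$ (n, k) = 1"
    and phat_dim: "phat \<in> carrier_vec N" and phat_pos: "\<forall>n<N. phat $ n > 0"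
    and V_dim: "V \<in> carrier_mat K K"
    and V_nonneg: "\<forall>i<K. \<forall>j<K. V $$ (i, j) \<ge> 0"
    and V_irr: "irreducible_mat V"
    and z_dim: "z \<in> carrier_vec K" and z_pos: "\<forall>k<K. z $ k > 0"
    and gamma_dim: "gamma \<in> carrier_vec K" and gamma_pos: "\<forall>k<K. gamma $ k > 0"
begin

definition vp :: "real vec \<Rightarrow> nat \<Rightarrow> real" where "vp p k = (\<Sum>j<K. V $$ (k,j) * p $ j)"
definition cs :: "real vec \<Rightarrow> nat \<Rightarrow> real" where "cs p n = (\<Sum>k<K. C $$ (n,k) * p $ k)"

abbreviation r :: "real vec \<Rightarrow> nat \<Rightarrow> real" where "r p k \<equiv> SIR V z k p / gamma $ k"
abbreviation Rm :: "real vec \<Rightarrow> real" where "Rm p \<equiv> Min {SIR V z k p / gamma $ k | k. k < K}"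

lemma Kpos: "K > 0" using K2 by auto
lemma Npos: "N > 0" using C_col Kpos by auto

lemma C_nn: "n < N \<Longrightarrow> k < K \<Longrightarrow> C $$ (n,k) \<ge> 0" using C_01 by fastforce
lemma C_le1: "n < N \<Longrightarrow> k < K \<Longrightarrow> C $$ (n,k) \<le> 1" using C_01 by fastforce

lemma pset_iff: "p \<in> pset K C phat \<longleftrightarrow> p \<in> carrier_vec K \<and> (\<forall>k<K. 0 \<le> p $ k) \<and> (\<forall>n<N. cs p n \<le> phat $ n)"
proof -
  have "p \<in> carrier_vec K \<Longrightarrow> n < N \<Longrightarrow> (C *\<^sub>v p) $ n = cs p n" for n
    using C_dim by (simp add: cs_def scalar_prod_def lessThan_atLeast0)
  thus ?thesis unfolding pset_def using C_dim by auto
qed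

lemma gfun_eq: "p \<in> carrier_vec K \<Longrightarrow> n < N \<Longrightarrow> gfun C phat n p = cs p n / phat $ n"
  using C_dim by (simp add: gfun_def cs_def scalar_prod_def lessThan_atLeast0)

lemma mv_eq: "p \<in> carrier_vec K \<Longrightarrow> k < K \<Longrightarrow> (V *\<^sub>v p) $ k = vp p k"
  using V_dim by (simp add: vp_def scalar_prod_def lessThan_atLeast0)

lemma vp_nn: "\<forall>k<K. 0 \<le> p $ k \<Longrightarrow> k < K \<Longrightarrow> vp p k \<ge> 0"
  unfolding vp_def using V_nonneg by (intro sum_nonneg) auto

lemma r_eq: "p \<in> carrier_vec K \<Longrightarrow> k < K \<Longrightarrow> r p k = p $ k / (gamma $ k * (vp p k + z $ k))"
  by (simp add: SIR_def mv_eq mult.commute)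

lemma setK: "{f k | k. k < K} = f ` {..<K}" by auto

lemma Rm_le: "k < K \<Longrightarrow> Rm p \<le> r p k"
  unfolding setK by (intro Min_le) auto

lemma Rm_ex: "\<exists>k<K. Rm p = r p k"
proof -
  have "Rm p \<in> (\<lambda>k. r p k) ` {..<K}" unfolding setK using Kpos by (intro Min_in) auto
  thus ?thesis by auto
qed

lemma Rm_ge: "\<forall>k<K. a \<le> r p k \<Longrightarrow> a \<le> Rm p"
  using Rm_ex by metis

lemma pos_point: "\<exists>p0 \<in> pset K C phat. \<forall>k<K. p0 $ k > 0"
proof -
  define m where "m = Min (((\<lambda>n. phat $ n)) ` {..<N})"
  have m: "m > 0" unfolding m_def using Npos phat_pos by (subst Min_gr_iff) auto
  have mle: "n < N \<Longrightarrow> m \<le> phat $ n" for n unfolding m_def by (intro Min_le) auto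
  define d where "d = m / K"
  have d: "d > 0" using m Kpos by (simp add: d_def)
  define p0 where "p0 = vec K (\<lambda>_. d)"
  have "cs p0 n \<le> phat $ n" if n: "n < N" for n
  proof -
    have "cs p0 n \<le> (\<Sum>k<K. 1 * d)" unfolding cs_def p0_def
      by (intro sum_mono mult_right_mono) (use C_le1 n d in auto)
    also have "\<dots> = m" using Kpos by (simp add: d_def)
    finally show ?thesis using mle[OF n] by linarith
  qed
  hence "p0 \<in> pset K C phat" unfolding pset_iff p0_def using d by auto
  thus ?thesis using d unfolding p0_def by (intro bexI[of _ "vec K (\<lambda>_. d)"]) auto
qed

end

locale opt = setting +
  fixes pbar :: "real vec"
  assumes pbar_in: "pbar \<in> pset K C phat"
    and pbar_max: "\<forall>p \<in> pset K C phat. Rm p \<le> Rm pbar"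
begin

abbreviation c where "c \<equiv> Rm pbar"

lemma r_pos: "p \<in> pset K C phat \<Longrightarrow> (\<forall>k<K. p $ k > 0) \<Longrightarrow> k < K \<Longrightarrow> r p k > 0"
  using vp_nn[of p k] z_pos gamma_pos by (auto simp: r_eq pset_iff intro!: divide_pos_pos)

lemma c_pos: "c > 0"
proof -
  obtain p0 where p0: "p0 \<in> pset K C phat" "\<forall>k<K. p0 $ k > 0" using pos_point by auto
  obtain k where k: "k < K" "Rm p0 = r p0 k" using Rm_ex by auto
  have "Rm p0 > 0" using k r_pos[OF p0] by auto
  thus ?thesis using pbar_max p0 by fastforce
qed

lemma opt_pos: assumes p: "p \<in> pset K C phat" and R: "Rm p = c" and k: "k < K" shows "p $ k > 0"
proof -
  have "r p k > 0" using Rm_le[OF k, of p] R c_pos by auto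
  moreover have "p $ k \<ge> 0" using p k by (auto simp: pset_iff)
  ultimately show ?thesis using p k by (cases "p $ k = 0") (auto simp: r_eq pset_iff)
qed

end



context opt begin

lemma step:
  assumes p: "p \<in> pset K C phat" and R: "Rm p = c" and k0: "k0 < K" "r p k0 \<noteq> c"
  shows "\<exists>p'. p' \<in> pset K C phat \<and> Rm p' = c \<and> r p' k0 \<noteq> c \<and>
     {k. k < K \<and> r p' k = c} \<subset> {k. k < K \<and> r p k = c}"
proof -
  have pc: "p \<in> carrier_vec K" and pnn: "\<forall>k<K. 0 \<le> p $ k" and pcs: "\<forall>n<N. cs p n \<le> phat $ n"
    using p by (auto simp: pset_iff)
  have ppos: "\<And>k. k < K \<Longrightarrow> p $ k > 0" using opt_pos[OF p R] .
  define S where "S = {k. k < K \<and> r p k = c}"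
  define T where "T = {k. k < K \<and> r p k \<noteq> c}"
  have rT: "k \<in> T \<Longrightarrow> r p k > c" for k using Rm_le[of k p] R unfolding T_def by force
  obtain i where i: "i < K" "r p i = c" using Rm_ex[of p] R by auto
  have iS: "i \<in> S" using i by (auto simp: S_def)
  have ik0: "i \<noteq> k0" using i k0 by auto
  obtain m where m: "(V ^\<^sub>m m) $$ (i, k0) > 0" using V_irr i k0 ik0 V_dim
    unfolding irreducible_mat_def by auto
  obtain a b where ab: "a \<in> S" "b < K" "b \<notin> S" "V $$ (a,b) > 0"
    using edge_exists[OF V_dim V_nonneg _ iS k0(1) _ m] k0 by (auto simp: S_def)
  have bT: "b \<in> T" using ab by (auto simp: S_def T_def)
  have fT: "finite T" "T \<noteq> {}" using k0 by (auto simp: T_def)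
  define M where "M = Max ((\<lambda>k. c / r p k) ` T)"
  have gen: "0 < (c'::real) \<Longrightarrow> c' < x \<Longrightarrow> c' / x < 1" for c' x by (subst divide_less_eq_1) auto
  have lt1: "k \<in> T \<Longrightarrow> c / r p k < 1" for k using rT[of k] c_pos by (intro gen) auto
  have Mlt: "M < 1" unfolding M_def using fT lt1
    by (subst Max_less_iff) auto
  have Mge: "k \<in> T \<Longrightarrow> c / r p k \<le> M" for k unfolding M_def using fT by (intro Max_ge) auto
  have Mpos: "M > 0" using Mge[of b] bT rT[OF bT] c_pos by (smt (verit) divide_pos_pos)
  define t where "t = (1 + M) / 2"
  have t: "0 < t" "t < 1" "M < t" using Mpos Mlt by (auto simp: t_def)
  have tT: "k \<in> T \<Longrightarrow> c < t * r p k" for k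
  proof -
    assume k: "k \<in> T"
    have "c / r p k < t" using Mge[OF k] t by auto
    moreover have "0 < (c'::real) \<Longrightarrow> c' < x \<Longrightarrow> c' / x < t \<Longrightarrow> c' < t * x" for c' x
      by (simp add: divide_less_eq mult.commute)
    ultimately show ?thesis using rT[OF k] c_pos by blast
  qed
  define p' where "p' = vec K (\<lambda>k. if k \<in> T then t * p $ k else p $ k)"
  have p'c: "p' \<in> carrier_vec K" by (simp add: p'_def)
  have p'le: "k < K \<Longrightarrow> p' $ k \<le> p $ k" for k using t pnn by (auto simp: p'_def intro!: mult_left_le_one_le)
  have p'nn: "k < K \<Longrightarrow> 0 \<le> p' $ k" for k using t pnn by (auto simp: p'_def)
  have p'in: "p' \<in> pset K C phat"
  proof -
    have "cs p' n \<le> phat $ n" if n: "n < N" for n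
    proof -
      have "cs p' n \<le> cs p n" unfolding cs_def
        by (intro sum_mono mult_left_mono) (use p'le C_nn n in auto)
      thus ?thesis using pcs n by force
    qed
    thus ?thesis using p'c p'nn by (auto simp: pset_iff)
  qed
  have vple: "k < K \<Longrightarrow> vp p' k \<le> vp p k" for k unfolding vp_def
    by (intro sum_mono mult_left_mono) (use p'le V_nonneg in auto)
  have vplt: "vp p' a < vp p a"
  proof -
    have aK: "a < K" using ab by (auto simp: S_def)
    show ?thesis unfolding vp_def
    proof (rule sum_strict_mono_ex1)
      show "\<forall>x\<in>{..<K}. V $$ (a, x) * p' $ x \<le> V $$ (a, x) * p $ x"
        using p'le V_nonneg aK by (auto intro: mult_left_mono)
      have "p' $ b < p $ b" using bT t ppos[OF ab(2)] ab(2) by (auto simp: p'_def)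
      thus "\<exists>x\<in>{..<K}. V $$ (a, x) * p' $ x < V $$ (a, x) * p $ x"
        using ab by (intro bexI[of _ b]) auto
    qed auto
  qed
  have vpnn': "k < K \<Longrightarrow> 0 \<le> vp p' k" for k using vp_nn p'nn by auto
  have rS: "k \<in> S \<Longrightarrow> r p k \<le> r p' k" for k
  proof -
    assume k: "k \<in> S" hence kK: "k < K" by (auto simp: S_def)
    have "p' $ k = p $ k" using k by (auto simp: p'_def S_def T_def)
    thus ?thesis using r_eq[OF pc kK] r_eq[OF p'c kK] div_mono_aux[OF pnn[rule_format, OF kK] _ vpnn'[OF kK] vple[OF kK]]
      gamma_pos z_pos kK by auto
  qed
  have ra: "r p a < r p' a"
  proof -
    have kK: "a < K" using ab by (auto simp: S_def)
    have "p' $ a = p $ a" using ab by (auto simp: p'_def S_def T_def)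
    thus ?thesis using r_eq[OF pc kK] r_eq[OF p'c kK] div_smono_aux[OF ppos[OF kK] _ vpnn'[OF kK] vplt]
      gamma_pos z_pos kK by auto
  qed
  have rT': "k \<in> T \<Longrightarrow> c < r p' k" for k
  proof -
    assume k: "k \<in> T" hence kK: "k < K" by (auto simp: T_def)
    have "t * r p k = (t * p $ k) / (gamma $ k * (vp p k + z $ k))" using r_eq[OF pc kK] by simp
    also have "\<dots> \<le> (t * p $ k) / (gamma $ k * (vp p' k + z $ k))"
      using div_mono_aux[OF _ _ vpnn'[OF kK] vple[OF kK]] gamma_pos z_pos kK t pnn by auto
    also have "\<dots> = r p' k" using r_eq[OF p'c kK] k kK by (simp add: p'_def)
    finally show ?thesis using tT[OF k] by auto
  qed
  have allge: "\<forall>k<K. c \<le> r p' k"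
  proof (intro allI impI)
    fix k assume kK: "k < K"
    show "c \<le> r p' k"
    proof (cases "k \<in> S")
      case True thus ?thesis using rS[OF True] by (auto simp: S_def)
    next
      case False hence "k \<in> T" using kK by (auto simp: S_def T_def)
      thus ?thesis using rT' by force
    qed
  qed
  have Rp': "Rm p' = c" using Rm_ge[OF allge] pbar_max p'in by force
  have k0T: "k0 \<in> T" using k0 by (auto simp: T_def)
  have sub: "{k. k < K \<and> r p' k = c} \<subseteq> S - {a}"
  proof
    fix k assume k: "k \<in> {k. k < K \<and> r p' k = c}"
    have "k \<notin> T" using rT' k by force
    moreover have "k \<noteq> a" using ra ab(1) k by (auto simp: S_def)
    ultimately show "k \<in> S - {a}" using k by (auto simp: S_def T_def)
  qed
  hence "{k. k < K \<and> r p' k = c} \<subset> S" using ab(1) by auto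
  thus ?thesis using p'in Rp' rT'[OF k0T] unfolding S_def by (intro exI[of _ p']) auto
qed

lemma all_eq_gen: "p \<in> pset K C phat \<Longrightarrow> Rm p = c \<Longrightarrow> card {k. k < K \<and> r p k = c} = n \<Longrightarrow> \<forall>k<K. r p k = c"
proof (induction n arbitrary: p rule: less_induct)
  case (less n)
  show ?case
  proof (rule ccontr)
    assume "\<not> (\<forall>k<K. r p k = c)"
    then obtain k0 where k0: "k0 < K" "r p k0 \<noteq> c" by auto
    from step[OF less.prems(1,2) k0] obtain p' where p': "p' \<in> pset K C phat" "Rm p' = c" "r p' k0 \<noteq> c"
      "{k. k < K \<and> r p' k = c} \<subset> {k. k < K \<and> r p k = c}" by blast
    have "card {k. k < K \<and> r p' k = c} < n" using psubset_card_mono[OF _ p'(4)] less.prems(3) by auto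
    from less.IH[OF this p'(1,2) refl] p'(3) k0 show False by auto
  qed
qed

lemma all_eq: "k < K \<Longrightarrow> r pbar k = c"
  using all_eq_gen[OF pbar_in refl refl] by auto

lemma pbar_pos: "k < K \<Longrightarrow> pbar $ k > 0" using opt_pos[OF pbar_in refl] .

lemma pbar_c: "pbar \<in> carrier_vec K" using pbar_in by (auto simp: pset_iff)

lemma pbar_eq: "k < K \<Longrightarrow> pbar $ k = c * (gamma $ k * (vp pbar k + z $ k))"
proof -
  assume k: "k < K"
  have d: "gamma $ k * (vp pbar k + z $ k) > 0"
    using gamma_pos z_pos vp_nn[of pbar k] k pbar_in by (auto simp: pset_iff intro!: mult_pos_pos add_nonneg_pos)
  from all_eq[OF k] r_eq[OF pbar_c k] have "pbar $ k / (gamma $ k * (vp pbar k + z $ k)) = c" by simp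
  moreover have "pbar $ k = (pbar $ k / (gamma $ k * (vp pbar k + z $ k))) * (gamma $ k * (vp pbar k + z $ k))"
    using d by (intro nonzero_eq_divide_eq[THEN iffD1, symmetric]) auto
  ultimately show ?thesis by simp
qed

end



lemma frac_aux: "(0::real) < p \<Longrightarrow> 0 < g \<Longrightarrow> 0 \<le> v \<Longrightarrow> 0 < z \<Longrightarrow> 1 < s \<Longrightarrow> p/(g*(v+z)) < s*p/(g*(s*v+z))"
proof -
  assume a: "(0::real) < p" "0 < g" "0 \<le> v" "0 < z" "1 < s"
  have e: "s*p/(g*(s*v+z)) = p/(g*(v+z/s))" using a by (simp add: field_simps)
  have zs: "z/s < z" "0 < z/s" using a by (auto simp: divide_less_eq)
  have "p/(g*(v+z)) < p/(g*(v+z/s))"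
    using a zs by (intro divide_strict_left_mono mult_strict_left_mono) (auto intro!: mult_pos_pos)
  thus ?thesis using e by simp
qed

context setting begin

lemma GV: "i < K \<Longrightarrow> j < K \<Longrightarrow> (Gam K gamma * V) $$ (i,j) = gamma $ i * V $$ (i,j)"
proof -
  assume i: "i < K" and j: "j < K"
  have "(Gam K gamma * V) $$ (i,j) = (\<Sum>l\<in>{0..<K}. (if i = l then gamma $ i else 0) * V $$ (l,j))"
    using i j V_dim by (simp add: Gam_def scalar_prod_def)
  also have "\<dots> = (\<Sum>l\<in>{0..<K}. (if l = i then gamma $ i * V $$ (i,j) else 0))"
    by (intro sum.cong) auto
  also have "\<dots> = gamma $ i * V $$ (i,j)" using i by simp
  finally show ?thesis .
qed

lemma GV_dim: "Gam K gamma * V \<in> carrier_mat K K" using V_dim unfolding Gam_def by (intro mult_carrier_mat) auto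

lemma Gz: "i < K \<Longrightarrow> (Gam K gamma *\<^sub>v z) $ i = gamma $ i * z $ i"
proof -
  assume i: "i < K"
  have "(Gam K gamma *\<^sub>v z) $ i = (\<Sum>l\<in>{0..<K}. (if i = l then gamma $ i else 0) * z $ l)"
    using i z_dim by (simp add: Gam_def scalar_prod_def)
  also have "\<dots> = (\<Sum>l\<in>{0..<K}. (if l = i then gamma $ i * z $ i else 0))"
    by (intro sum.cong) auto
  also have "\<dots> = gamma $ i * z $ i" using i by simp
  finally show ?thesis .
qed

lemma Gz_dim: "Gam K gamma *\<^sub>v z \<in> carrier_vec K" unfolding carrier_vec_def Gam_def by simp

lemma outer: "i < K \<Longrightarrow> j < K \<Longrightarrow> w \<in> carrier_vec K \<Longrightarrow>
   (mat_of_cols K [w] * mat_of_rows K [u]) $$ (i,j) = w $ i * u $ j"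
  by (simp add: scalar_prod_def mat_of_cols_index mat_of_rows_index row_def col_def)

lemma B_dim: "Bmat K C phat V z gamma n \<in> carrier_mat K K"
  unfolding Bmat_def using GV_dim by auto

lemma B_entry: "n < N \<Longrightarrow> i < K \<Longrightarrow> j < K \<Longrightarrow> Bmat K C phat V z gamma n $$ (i,j)
   = gamma $ i * V $$ (i,j) + (1 / phat $ n) * (gamma $ i * z $ i * C $$ (n,j))"
proof -
  assume n: "n < N" and i: "i < K" and j: "j < K"
  let ?P = "mat_of_cols K [Gam K gamma *\<^sub>v z] * mat_of_rows K [row C n]"
  have Pd: "?P \<in> carrier_mat K K" by (intro mult_carrier_mat) auto
  have o: "?P $$ (i,j) = (Gam K gamma *\<^sub>v z) $ i * row C n $ j" by (rule outer[OF i j Gz_dim])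
  have "Bmat K C phat V z gamma n $$ (i,j) = (Gam K gamma * V) $$ (i,j) + (1 / phat $ n) * ?P $$ (i,j)"
    unfolding Bmat_def using Pd i j by simp
  also have "\<dots> = gamma $ i * V $$ (i,j) + (1 / phat $ n) * (gamma $ i * z $ i * C $$ (n,j))"
    unfolding o GV[OF i j] Gz[OF i] using C_dim n j by simp
  finally show ?thesis .
qed

lemma A_dim: "Amat K C phat V z gamma n \<in> carrier_mat (K+1) (K+1)"
  unfolding Amat_def using GV_dim by (intro four_block_carrier_mat) auto

lemma A_entry: "n < N \<Longrightarrow> i < K + 1 \<Longrightarrow> j < K + 1 \<Longrightarrow> Amat K C phat V z gamma n $$ (i,j)
   = (if i < K then if j < K then gamma $ i * V $$ (i,j) else gamma $ i * z $ i
      else if j < K then (1 / phat $ n) * (\<Sum>l<K. C $$ (n,l) * (gamma $ l * V $$ (l,j)))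
      else (1 / phat $ n) * (\<Sum>l<K. C $$ (n,l) * (gamma $ l * z $ l)))"
proof -
  assume n: "n < N" and i: "i < K + 1" and j: "j < K + 1"
  let ?GV = "Gam K gamma * V"
  let ?M1 = "mat_of_cols K [Gam K gamma *\<^sub>v z]"
  let ?R = "mat_of_rows K [row C n]"
  let ?s = "1 / phat $ n"
  have d: "dim_row ?GV = K" "dim_col ?GV = K" using GV_dim by auto
  have e: "Amat K C phat V z gamma n $$ (i,j) = (if i < K then if j < K then ?GV $$ (i,j) else ?M1 $$ (i, j - K)
      else if j < K then (?s \<cdot>\<^sub>m (?R * ?GV)) $$ (i - K, j) else ?s * (row C n \<bullet> (Gam K gamma *\<^sub>v z)))"
    unfolding Amat_def using i j d by (subst index_mat_four_block) auto
  show ?thesis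
  proof (cases "i < K")
    case True
    show ?thesis
    proof (cases "j < K")
      case True2: True
      thus ?thesis using e True GV by simp
    next
      case False
      hence "j - K = 0" using j by auto
      thus ?thesis using e True False Gz[OF True] by (simp add: mat_of_cols_index)
    qed
  next
    case False
    hence iK: "i - K = 0" using i by auto
    show ?thesis
    proof (cases "j < K")
      case True
      have "(?s \<cdot>\<^sub>m (?R * ?GV)) $$ (0, j) = ?s * (row ?R 0 \<bullet> col ?GV j)"
        using True d by simp
      also have "row ?R 0 \<bullet> col ?GV j = (\<Sum>l<K. C $$ (n,l) * (gamma $ l * V $$ (l,j)))"
        unfolding scalar_prod_def lessThan_atLeast0
      proof (rule sum.cong)
        show "{0..<dim_vec (col ?GV j)} = {0..<K}" using d by simp
      next
        fix l assume l: "l \<in> {0..<K}"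
        hence lK: "l < K" by simp
        have "col ?GV j $ l = ?GV $$ (l,j)" using lK True d by (simp del: index_mult_mat(1))
        also have "\<dots> = gamma $ l * V $$ (l,j)" using GV[OF lK True] .
        finally show "row ?R 0 $ l * col ?GV j $ l = C $$ (n,l) * (gamma $ l * V $$ (l,j))"
          using lK C_dim n by (simp add: mat_of_rows_index)
      qed
      finally show ?thesis using e False True iK by simp
    next
      case False2: False
      have "row C n \<bullet> (Gam K gamma *\<^sub>v z) = (\<Sum>l<K. C $$ (n,l) * (gamma $ l * z $ l))"
        unfolding scalar_prod_def lessThan_atLeast0
      proof (rule sum.cong)
        show "{0..<dim_vec (Gam K gamma *\<^sub>v z)} = {0..<K}" by (simp add: Gam_def)
      next
        fix l assume "l \<in> {0..<K}"
        hence lK: "l < K" by simp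
        show "row C n $ l * (Gam K gamma *\<^sub>v z) $ l = C $$ (n,l) * (gamma $ l * z $ l)"
          using Gz[OF lK] lK C_dim n by (simp del: index_mult_mat_vec)
      qed
      thus ?thesis using e False False2 by simp
    qed
  qed
qed

end



context opt begin

abbreviation g where "g n \<equiv> gfun C phat n pbar"

lemma g_eq: "n < N \<Longrightarrow> g n = cs pbar n / phat $ n" using gfun_eq[OF pbar_c] .

lemma g_le1: "n < N \<Longrightarrow> g n \<le> 1"
  using pbar_in phat_pos by (auto simp: g_eq pset_iff divide_le_eq_1)

lemma pbar_nn: "k < K \<Longrightarrow> 0 \<le> pbar $ k" using pbar_pos by (simp add: less_imp_le)

lemma cs_nn: "n < N \<Longrightarrow> cs pbar n \<ge> 0"
  unfolding cs_def using C_nn pbar_nn by (intro sum_nonneg mult_nonneg_nonneg) auto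

lemma G1: "Max {g m | m. m < N} = 1"
proof -
  have setN: "{g m | m. m < N} = g ` {..<N}" by auto
  define G where "G = Max (g ` {..<N})"
  have fin: "finite (g ` {..<N})" "g ` {..<N} \<noteq> {}" using Npos by auto
  have Gle: "G \<le> 1" unfolding G_def using fin g_le1 by (subst Max_le_iff) auto
  have Gge: "n < N \<Longrightarrow> g n \<le> G" for n unfolding G_def using fin by (intro Max_ge) auto
  obtain n0 where n0: "n0 < N" "C $$ (n0, 0) = 1" using C_col Kpos by auto
  have "cs pbar n0 \<ge> C $$ (n0, 0) * pbar $ 0" unfolding cs_def
    using C_nn[OF n0(1)] pbar_nn Kpos by (intro member_le_sum mult_nonneg_nonneg) auto
  hence "cs pbar n0 > 0" using n0 pbar_pos[OF Kpos] by simp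
  hence "g n0 > 0" using g_eq[OF n0(1)] phat_pos n0 by auto
  hence Gpos: "G > 0" using Gge[OF n0(1)] by auto
  have "G = 1"
  proof (rule ccontr)
    assume "G \<noteq> 1" hence G1: "G < 1" using Gle by auto
    define s where "s = 1 / G"
    have s: "s > 1" using G1 Gpos by (simp add: s_def)
    define p' where "p' = s \<cdot>\<^sub>v pbar"
    have p'c: "p' \<in> carrier_vec K" using pbar_c by (simp add: p'_def)
    have p'k: "k < K \<Longrightarrow> p' $ k = s * pbar $ k" for k using pbar_c by (simp add: p'_def)
    have csp: "n < N \<Longrightarrow> cs p' n = s * cs pbar n" for n
      unfolding cs_def using p'k by (simp add: sum_distrib_left ac_simps)
    have vpp: "k < K \<Longrightarrow> vp p' k = s * vp pbar k" for k
      unfolding vp_def using p'k by (simp add: sum_distrib_left ac_simps)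
    have p'in: "p' \<in> pset K C phat"
    proof -
      have "cs p' n \<le> phat $ n" if n: "n < N" for n
      proof -
        have "cs pbar n / phat $ n \<le> G" using Gge[OF n] g_eq[OF n] by simp
        hence "cs pbar n \<le> G * phat $ n" using phat_pos n by (simp add: divide_le_eq)
        hence "s * cs pbar n \<le> s * (G * phat $ n)" using s by (intro mult_left_mono) auto
        also have "\<dots> = phat $ n" using Gpos by (simp add: s_def)
        finally show ?thesis using csp[OF n] by simp
      qed
      moreover have "k < K \<Longrightarrow> 0 \<le> p' $ k" for k using p'k pbar_pos s by (simp add: less_imp_le)
      ultimately show ?thesis using p'c by (auto simp: pset_iff)
    qed
    have "\<forall>k<K. r pbar k < r p' k"
    proof (intro allI impI)
      fix k assume k: "k < K"
      have vnn: "vp pbar k \<ge> 0" using vp_nn k pbar_pos by (simp add: less_imp_le)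
      show "r pbar k < r p' k"
        using frac_aux[OF pbar_pos[OF k] gamma_pos[rule_format, OF k] vnn z_pos[rule_format, OF k] s]
          r_eq[OF pbar_c k] r_eq[OF p'c k] p'k[OF k] vpp[OF k] by simp
    qed
    moreover obtain k where k: "k < K" "Rm p' = r p' k" using Rm_ex by auto
    ultimately have "Rm p' > c" using Rm_le[OF k(1), of pbar] by auto
    thus False using pbar_max p'in by force
  qed
  thus ?thesis unfolding setN G_def .
qed

lemma N0_eq: "N0 N C phat pbar = {n. n < N \<and> g n = 1}"
  unfolding N0_def G1 by auto

lemma B_sum: "n < N \<Longrightarrow> i < K \<Longrightarrow>
  (\<Sum>j<K. Bmat K C phat V z gamma n $$ (i,j) * pbar $ j) = pbar $ i / c - gamma $ i * z $ i * (1 - g n)"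
proof -
  assume n: "n < N" and i: "i < K"
  have "(\<Sum>j<K. Bmat K C phat V z gamma n $$ (i,j) * pbar $ j)
     = (\<Sum>j<K. gamma $ i * (V $$ (i,j) * pbar $ j) + (gamma $ i * z $ i / phat $ n) * (C $$ (n,j) * pbar $ j))"
    by (intro sum.cong) (auto simp: B_entry[OF n i] algebra_simps)
  also have "\<dots> = gamma $ i * vp pbar i + gamma $ i * z $ i * g n"
    by (simp add: sum.distrib vp_def cs_def g_eq[OF n] sum_distrib_left sum_divide_distrib ac_simps)
  also have "\<dots> = pbar $ i / c - gamma $ i * z $ i * (1 - g n)"
    using c_pos by (subst pbar_eq[OF i]) (simp add: field_simps)
  finally show ?thesis .
qed

lemma A_sum: "n < N \<Longrightarrow> i < K + 1 \<Longrightarrow>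
  (\<Sum>j<K+1. Amat K C phat V z gamma n $$ (i,j) * (if j < K then pbar $ j else 1))
   = (if i < K then pbar $ i / c else g n / c)"
proof -
  assume n: "n < N" and i: "i < K + 1"
  let ?A = "Amat K C phat V z gamma n"
  let ?q = "\<lambda>j. if j < K then pbar $ j else (1::real)"
  have split: "(\<Sum>j<K+1. ?A $$ (i,j) * ?q j) = (\<Sum>j<K. ?A $$ (i,j) * pbar $ j) + ?A $$ (i,K)"
    by simp
  show ?thesis
  proof (cases "i < K")
    case True
    have "(\<Sum>j<K. ?A $$ (i,j) * pbar $ j) = (\<Sum>j<K. gamma $ i * (V $$ (i,j) * pbar $ j))"
      by (intro sum.cong) (use True n i in \<open>auto simp: A_entry\<close>)
    also have "\<dots> = gamma $ i * vp pbar i" by (simp add: vp_def sum_distrib_left)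
    finally have "(\<Sum>j<K+1. ?A $$ (i,j) * ?q j) = gamma $ i * vp pbar i + gamma $ i * z $ i"
      using split True n by (simp add: A_entry)
    also have "\<dots> = pbar $ i / c" using c_pos by (subst pbar_eq[OF True]) (simp add: field_simps)
    finally show ?thesis using True by simp
  next
    case False
    let ?s = "1 / phat $ n"
    have "(\<Sum>j<K. ?A $$ (i,j) * pbar $ j) = (\<Sum>j<K. ?s * (\<Sum>l<K. C $$ (n,l) * (gamma $ l * V $$ (l,j))) * pbar $ j)"
      by (intro sum.cong) (use False n i in \<open>auto simp: A_entry\<close>)
    also have "\<dots> = ?s * (\<Sum>l<K. C $$ (n,l) * gamma $ l * vp pbar l)"
      unfolding vp_def sum_distrib_left sum_distrib_right
      by (subst sum.swap) (simp add: ac_simps)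
    finally have "(\<Sum>j<K+1. ?A $$ (i,j) * ?q j) = ?s * (\<Sum>l<K. C $$ (n,l) * gamma $ l * vp pbar l)
        + ?s * (\<Sum>l<K. C $$ (n,l) * (gamma $ l * z $ l))"
      using split False n i by (simp add: A_entry)
    also have "\<dots> = ?s * (\<Sum>l<K. C $$ (n,l) * (gamma $ l * (vp pbar l + z $ l)))"
    proof -
      have "(\<Sum>l<K. C $$ (n,l) * gamma $ l * vp pbar l) + (\<Sum>l<K. C $$ (n,l) * (gamma $ l * z $ l))
         = (\<Sum>l<K. C $$ (n,l) * (gamma $ l * (vp pbar l + z $ l)))"
        by (simp add: distrib_left sum.distrib mult.assoc)
      thus ?thesis by (simp only: distrib_left[symmetric])
    qed
    also have "\<dots> = ?s * (\<Sum>l<K. C $$ (n,l) * pbar $ l / c)"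
      using pbar_eq c_pos by (intro arg_cong[where f = "\<lambda>x. ?s * x"] sum.cong) (auto simp: field_simps)
    also have "\<dots> = g n / c" by (simp add: g_eq[OF n] cs_def sum_divide_distrib mult.commute)
    finally show ?thesis using False by simp
  qed
qed

end



lemma Max_eq_aux:
  fixes f :: "nat \<Rightarrow> real"
  assumes "\<forall>n<N. f n \<le> a" "n0 < N" "f n0 = a"
  shows "Max {f n | n. n < N} = a"
proof -
  have e: "{f n | n. n < N} = f ` {..<N}" by auto
  show ?thesis unfolding e using assms by (intro Max_eqI) auto
qed

context opt begin

lemma gnn: "k < K \<Longrightarrow> 0 \<le> gamma $ k" using gamma_pos by (simp add: less_imp_le)
lemma znn: "k < K \<Longrightarrow> 0 \<le> z $ k" using z_pos by (simp add: less_imp_le)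
lemma Pnn: "n < N \<Longrightarrow> 0 \<le> 1 / phat $ n" using phat_pos by (simp add: less_imp_le)

lemma B_nn: "n < N \<Longrightarrow> \<forall>i<K. \<forall>j<K. Bmat K C phat V z gamma n $$ (i,j) \<ge> 0"
proof (intro allI impI)
  fix i j assume n: "n < N" and i: "i < K" and j: "j < K"
  show "Bmat K C phat V z gamma n $$ (i,j) \<ge> 0" unfolding B_entry[OF n i j]
    using V_nonneg gnn[OF i] znn[OF i] C_nn[OF n j] Pnn[OF n] i j
    by (intro add_nonneg_nonneg mult_nonneg_nonneg) auto
qed

lemma A_nn: "n < N \<Longrightarrow> \<forall>i<K+1. \<forall>j<K+1. Amat K C phat V z gamma n $$ (i,j) \<ge> 0"
proof (intro allI impI)
  fix i j assume n: "n < N" and i: "i < K+1" and j: "j < K+1"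
  show "Amat K C phat V z gamma n $$ (i,j) \<ge> 0" unfolding A_entry[OF n i j]
    using V_nonneg gnn znn C_nn[OF n] Pnn[OF n] i j
    by (auto intro!: sum_nonneg mult_nonneg_nonneg divide_nonneg_nonneg)
qed

lemma rhoB_le: "n < N \<Longrightarrow> rho (Bmat K C phat V z gamma n) \<le> 1 / c"
proof -
  assume n: "n < N"
  show ?thesis
  proof (rule cw_upper[OF B_dim Kpos B_nn[OF n], of "\<lambda>j. pbar $ j"])
    show "\<forall>i<K. 0 < pbar $ i" using pbar_pos by auto
    show "\<forall>i<K. (\<Sum>j<K. Bmat K C phat V z gamma n $$ (i, j) * pbar $ j) \<le> 1 / c * pbar $ i"
    proof (intro allI impI)
      fix i assume i: "i < K"
      have "0 \<le> gamma $ i * z $ i * (1 - g n)" using gamma_pos z_pos g_le1[OF n] i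
        by (intro mult_nonneg_nonneg) (auto intro: less_imp_le)
      thus "(\<Sum>j<K. Bmat K C phat V z gamma n $$ (i, j) * pbar $ j) \<le> 1 / c * pbar $ i"
        using B_sum[OF n i] by simp
    qed
  qed
qed

lemma rhoB_eq: "n < N \<Longrightarrow> g n = 1 \<Longrightarrow> rho (Bmat K C phat V z gamma n) = 1 / c"
proof -
  assume n: "n < N" and g1: "g n = 1"
  have "1 / c \<le> rho (Bmat K C phat V z gamma n)"
  proof (rule eig_lower[OF B_dim Kpos, of "\<lambda>j. pbar $ j"])
    show "\<exists>i<K. pbar $ i \<noteq> 0" using pbar_pos Kpos by force
    show "0 \<le> 1 / c" using c_pos by simp
    show "\<forall>i<K. (\<Sum>j<K. Bmat K C phat V z gamma n $$ (i, j) * pbar $ j) = 1 / c * pbar $ i"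
      using B_sum[OF n] g1 by simp
  qed
  thus ?thesis using rhoB_le[OF n] by simp
qed

lemma rhoB_lt: "n < N \<Longrightarrow> g n < 1 \<Longrightarrow> rho (Bmat K C phat V z gamma n) < 1 / c"
proof -
  assume n: "n < N" and g1: "g n < 1"
  let ?B = "Bmat K C phat V z gamma n"
  define h where "h i = (\<Sum>j<K. ?B $$ (i, j) * pbar $ j) / pbar $ i" for i
  define l where "l = Max (h ` {..<K})"
  have fin: "finite (h ` {..<K})" "h ` {..<K} \<noteq> {}" using Kpos by auto
  have hlt: "h i < 1 / c" if i: "i < K" for i
  proof -
    have "0 < gamma $ i * z $ i * (1 - g n)" using gamma_pos z_pos g1 i by auto
    hence "(\<Sum>j<K. ?B $$ (i, j) * pbar $ j) < pbar $ i / c" using B_sum[OF n i] by simp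
    thus ?thesis using pbar_pos[OF i] unfolding h_def by (simp add: divide_less_eq)
  qed
  have "l < 1 / c" unfolding l_def using fin hlt by (subst Max_less_iff) auto
  moreover have "rho ?B \<le> l"
  proof (rule cw_upper[OF B_dim Kpos B_nn[OF n], of "\<lambda>j. pbar $ j"])
    show "\<forall>i<K. 0 < pbar $ i" using pbar_pos by auto
    show "\<forall>i<K. (\<Sum>j<K. ?B $$ (i, j) * pbar $ j) \<le> l * pbar $ i"
    proof (intro allI impI)
      fix i assume i: "i < K"
      have "h i \<le> l" unfolding l_def using fin i by (intro Max_ge) auto
      thus "(\<Sum>j<K. ?B $$ (i, j) * pbar $ j) \<le> l * pbar $ i"
        using pbar_pos[OF i] unfolding h_def by (simp add: divide_le_eq)
    qed
  qed
  ultimately show ?thesis by simp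
qed

lemma rhoA_le: "n < N \<Longrightarrow> rho (Amat K C phat V z gamma n) \<le> 1 / c"
proof -
  assume n: "n < N"
  show ?thesis
  proof (rule cw_upper[OF A_dim _ A_nn[OF n], where p = "\<lambda>j. if j < K then pbar $ j else 1"])
    show "0 < K + 1" by simp
    show "\<forall>i<K+1. 0 < (if i < K then pbar $ i else 1)" using pbar_pos by auto
    show "\<forall>i<K+1. (\<Sum>j<K+1. Amat K C phat V z gamma n $$ (i, j) * (if j < K then pbar $ j else 1))
       \<le> 1 / c * (if i < K then pbar $ i else 1)"
      using A_sum[OF n] g_le1[OF n] c_pos by (auto simp: divide_right_mono)
  qed
qed

lemma rhoA_eq: "n < N \<Longrightarrow> g n = 1 \<Longrightarrow> rho (Amat K C phat V z gamma n) = 1 / c"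
proof -
  assume n: "n < N" and g1: "g n = 1"
  have "1 / c \<le> rho (Amat K C phat V z gamma n)"
  proof (rule eig_lower[OF A_dim, where p = "\<lambda>j. if j < K then pbar $ j else 1"])
    show "0 < K + 1" by simp
    show "\<exists>i<K+1. (if i < K then pbar $ i else 1) \<noteq> 0" by (intro exI[of _ K]) auto
    show "0 \<le> 1 / c" using c_pos by simp
    show "\<forall>i<K+1. (\<Sum>j<K+1. Amat K C phat V z gamma n $$ (i, j) * (if j < K then pbar $ j else 1))
       = 1 / c * (if i < K then pbar $ i else 1)"
      using A_sum[OF n] g1 by auto
  qed
  thus ?thesis using rhoA_le[OF n] by simp
qed

lemma exists_tight: "\<exists>n0<N. g n0 = 1"
proof -
  have "Max {g m | m. m < N} \<in> {g m | m. m < N}"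
    using Npos by (intro Max_in) (auto simp: setK[symmetric] intro: finite_subset)
  thus ?thesis using G1 by auto
qed

lemma main:
  shows "N0 N C phat pbar =
           {n0. n0 < N \<and> rho (Bmat K C phat V z gamma n0) = Max {rho (Bmat K C phat V z gamma n) | n. n < N}}
         \<and> ((\<exists>p \<in> pset K C phat. \<forall>k<K. SIR V z k p \<ge> gamma $ k) \<longleftrightarrow>
              (Max {rho (Bmat K C phat V z gamma n) | n. n < N} = Max {rho (Amat K C phat V z gamma n) | n. n < N}
               \<and> Max {rho (Amat K C phat V z gamma n) | n. n < N} \<le> 1))"
proof -
  obtain n0 where n0: "n0 < N" "g n0 = 1" using exists_tight by auto
  have MB: "Max {rho (Bmat K C phat V z gamma n) | n. n < N} = 1 / c"
    using rhoB_le rhoB_eq[OF n0] n0 by (intro Max_eq_aux) auto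
  have MA: "Max {rho (Amat K C phat V z gamma n) | n. n < N} = 1 / c"
    using rhoA_le rhoA_eq[OF n0] n0 by (intro Max_eq_aux) auto
  have S: "N0 N C phat pbar =
           {n0. n0 < N \<and> rho (Bmat K C phat V z gamma n0) = Max {rho (Bmat K C phat V z gamma n) | n. n < N}}"
    unfolding N0_eq MB
  proof (rule Set.set_eqI, rule iffI)
    fix n assume "n \<in> {n. n < N \<and> g n = 1}" thus "n \<in> {n0. n0 < N \<and> rho (Bmat K C phat V z gamma n0) = 1 / c}"
      using rhoB_eq by auto
  next
    fix n assume "n \<in> {n0. n0 < N \<and> rho (Bmat K C phat V z gamma n0) = 1 / c}"
    hence n: "n < N" and r: "rho (Bmat K C phat V z gamma n) = 1 / c" by auto
    have "g n = 1"
    proof (rule ccontr)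
      assume "g n \<noteq> 1" hence "g n < 1" using g_le1[OF n] by auto
      from rhoB_lt[OF n this] r show False by simp
    qed
    thus "n \<in> {n. n < N \<and> g n = 1}" using n by auto
  qed
  have F: "(\<exists>p \<in> pset K C phat. \<forall>k<K. SIR V z k p \<ge> gamma $ k) \<longleftrightarrow> 1 / c \<le> 1"
  proof
    assume "\<exists>p \<in> pset K C phat. \<forall>k<K. SIR V z k p \<ge> gamma $ k"
    then obtain p where p: "p \<in> pset K C phat" "\<forall>k<K. SIR V z k p \<ge> gamma $ k" by auto
    have "\<forall>k<K. 1 \<le> r p k" using p(2) gamma_pos by (auto simp: le_divide_eq)
    hence "1 \<le> Rm p" by (rule Rm_ge)
    hence "1 \<le> c" using pbar_max p(1) by force
    thus "1 / c \<le> 1" by simp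
  next
    assume "1 / c \<le> 1"
    hence c1: "1 \<le> c" using c_pos by (simp add: divide_le_eq)
    have "\<forall>k<K. SIR V z k pbar \<ge> gamma $ k"
    proof (intro allI impI)
      fix k assume k: "k < K"
      have "1 \<le> r pbar k" using all_eq[OF k] c1 by simp
      thus "SIR V z k pbar \<ge> gamma $ k" using gamma_pos k by (simp add: le_divide_eq)
    qed
    thus "\<exists>p \<in> pset K C phat. \<forall>k<K. SIR V z k p \<ge> gamma $ k" using pbar_in by auto
  qed
  show ?thesis using S F MA MB by simp
qed

end


theorem theorem2:
  fixes K N :: nat and C V :: "real mat" and phat z gamma pbar :: "real vec"
  assumes K2: "K \<ge> 2"
    and C_dim: "C \<in> carrier_mat N K"
    and C_01: "\<forall>n<N. \<forall>k<K. C $$ (n, k) = 0 \<or> C $$ (n, k) = 1"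
    and C_col: "\<forall>k<K. \<exists>n<N. C $$ (n, k) = 1"
    and phat_dim: "phat \<in> carrier_vec N" and phat_pos: "\<forall>n<N. phat $ n > 0"
    and V_dim: "V \<in> carrier_mat K K"
    and V_nonneg: "\<forall>i<K. \<forall>j<K. V $$ (i, j) \<ge> 0"
    and V_diag: "\<forall>k<K. V $$ (k, k) = 0"
    and V_irr: "irreducible_mat V"
    and z_dim: "z \<in> carrier_vec K" and z_pos: "\<forall>k<K. z $ k > 0"
    and gamma_dim: "gamma \<in> carrier_vec K" and gamma_pos: "\<forall>k<K. gamma $ k > 0"
    and pbar_in: "pbar \<in> pset K C phat"
    and pbar_max: "\<forall>p \<in> pset K C phat.
        Min {SIR V z k p / gamma $ k | k. k < K} \<le> Min {SIR V z k pbar / gamma $ k | k. k < K}"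
  shows "N0 N C phat pbar =
           {n0. n0 < N \<and> rho (Bmat K C phat V z gamma n0) = Max {rho (Bmat K C phat V z gamma n) | n. n < N}}
         \<and> ((\<exists>p \<in> pset K C phat. \<forall>k<K. SIR V z k p \<ge> gamma $ k) \<longleftrightarrow>
              (Max {rho (Bmat K C phat V z gamma n) | n. n < N} = Max {rho (Amat K C phat V z gamma n) | n. n < N}
               \<and> Max {rho (Amat K C phat V z gamma n) | n. n < N} \<le> 1))"
  proof -
  interpret opt K N C V phat z gamma pbar
    using K2 C_dim C_01 C_col phat_dim phat_pos V_dim V_nonneg V_irr z_dim z_pos gamma_dim gamma_pos
      pbar_in pbar_max by unfold_locales auto
  show ?thesis by (rule main)
qed

end
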